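(* Let $K\ge2$, $0<q<p$ with $p+(K-1)q=1$, and $\phi\in\Delta$. If $\theta$ is an MLE for $\phi$, then for any $i,j\in\{1,\dots,K\}$, $\phi_i\le\phi_j$ implies $\theta_i\le\theta_j$.
   Context: $\Delta=\{\theta\in\mathbb{R}^K:\theta_i\ge0,\sum_i\theta_i=1\}$. $\mathcal{M}(\theta)_y=q+(p-q)\theta_y$. $\theta\in\Delta$ is an MLE for $\phi$ if it minimizes $D_{KL}(\phi,\mathcal{M}(\theta))=\sum_i\phi_i\log(\phi_i/\mathcal{M}(\theta)_i)$ (convention $0\log(0/\cdot)=0$) over $\Delta$ (for an empirical histogram $\phi$ of observed outputs $y_1,\dots,y_N$ this is equivalent to maximizing the likelihood $\prod_u\mathcal{M}(\theta)_{y_u}$). *)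

theory Defs
  imports Complex_Main
begin

definition simplex :: "nat \<Rightarrow> (nat \<Rightarrow> real) set" where
  "simplex K = {\<theta>. (\<forall>i\<in>{1..K}. \<theta> i \<ge> 0) \<and> (\<Sum>i=1..K. \<theta> i) = 1}"

definition model :: "real \<Rightarrow> real \<Rightarrow> (nat \<Rightarrow> real) \<Rightarrow> nat \<Rightarrow> real" where
  "model p q \<theta> y = q + (p - q) * \<theta> y"

definition KL :: "nat \<Rightarrow> (nat \<Rightarrow> real) \<Rightarrow> (nat \<Rightarrow> real) \<Rightarrow> real" where
  "KL K \<phi> \<mu> = (\<Sum>i=1..K. if \<phi> i = 0 then 0 else \<phi> i * ln (\<phi> i / \<mu> i))"

definition is_MLE :: "nat \<Rightarrow> real \<Rightarrow> real \<Rightarrow> (nat \<Rightarrow> real) \<Rightarrow> (nat \<Rightarrow> real) \<Rightarrow> bool" where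
  "is_MLE K p q \<phi> \<theta> \<longleftrightarrow> \<theta> \<in> simplex K \<and>
     (\<forall>\<theta>'\<in>simplex K. KL K \<phi> (model p q \<theta>) \<le> KL K \<phi> (model p q \<theta>'))"

end

theory Submission
  imports Defs
begin

definition TT :: "real \<Rightarrow> real \<Rightarrow> real" where
  "TT f m = (if f = 0 then 0 else f * ln (f / m))"

lemma KL_split:
  assumes "u \<in> {1..K}" "v \<in> {1..K}" "u \<noteq> v"
  shows "KL K \<phi> \<mu> = TT (\<phi> u) (\<mu> u) + TT (\<phi> v) (\<mu> v) + (\<Sum>k\<in>{1..K}-{u}-{v}. TT (\<phi> k) (\<mu> k))"
proof -
  have "KL K \<phi> \<mu> = (\<Sum>k\<in>{1..K}. TT (\<phi> k) (\<mu> k))" unfolding KL_def TT_def by simp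
  also have "\<dots> = TT (\<phi> u) (\<mu> u) + (\<Sum>k\<in>{1..K}-{u}. TT (\<phi> k) (\<mu> k))"
    using assms by (simp add: sum.remove)
  also have "(\<Sum>k\<in>{1..K}-{u}. TT (\<phi> k) (\<mu> k)) = TT (\<phi> v) (\<mu> v) + (\<Sum>k\<in>{1..K}-{u}-{v}. TT (\<phi> k) (\<mu> k))"
    using assms by (subst sum.remove[of _ v]) auto
  finally show ?thesis by simp
qed

lemma KL_mod:
  assumes "u \<in> {1..K}" "v \<in> {1..K}" "u \<noteq> v"
  shows "KL K \<phi> (model p q (\<theta>(u:=x, v:=y))) - KL K \<phi> (model p q \<theta>) =
     (TT (\<phi> u) (q + (p-q)*x) + TT (\<phi> v) (q + (p-q)*y)) - (TT (\<phi> u) (model p q \<theta> u) + TT (\<phi> v) (model p q \<theta> v))"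
proof -
  have "(\<Sum>k\<in>{1..K}-{u}-{v}. TT (\<phi> k) (model p q (\<theta>(u:=x, v:=y)) k)) = (\<Sum>k\<in>{1..K}-{u}-{v}. TT (\<phi> k) (model p q \<theta> k))"
    by (rule sum.cong) (auto simp: model_def)
  then show ?thesis
    using KL_split[OF assms, of \<phi> "model p q (\<theta>(u:=x, v:=y))"] KL_split[OF assms, of \<phi> "model p q \<theta>"] assms
    by (simp add: model_def)
qed

lemma simplex_mod:
  assumes "\<theta> \<in> simplex K" "u \<in> {1..K}" "v \<in> {1..K}" "u \<noteq> v" "x \<ge> 0" "y \<ge> 0" "x + y = \<theta> u + \<theta> v"
  shows "\<theta>(u:=x, v:=y) \<in> simplex K"
proof -
  have s: "\<And>f::nat\<Rightarrow>real. (\<Sum>k\<in>{1..K}. f k) = f u + f v + (\<Sum>k\<in>{1..K}-{u}-{v}. f k)"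
  proof -
    fix f :: "nat \<Rightarrow> real"
    have "(\<Sum>k\<in>{1..K}. f k) = f u + (\<Sum>k\<in>{1..K}-{u}. f k)" using assms by (simp add: sum.remove)
    also have "(\<Sum>k\<in>{1..K}-{u}. f k) = f v + (\<Sum>k\<in>{1..K}-{u}-{v}. f k)"
      using assms by (subst sum.remove[of _ v]) auto
    finally show "(\<Sum>k\<in>{1..K}. f k) = f u + f v + (\<Sum>k\<in>{1..K}-{u}-{v}. f k)" by simp
  qed
  have r: "(\<Sum>k\<in>{1..K}-{u}-{v}. (\<theta>(u:=x, v:=y)) k) = (\<Sum>k\<in>{1..K}-{u}-{v}. \<theta> k)"
    by (rule sum.cong) auto
  have "(\<Sum>k\<in>{1..K}. (\<theta>(u:=x, v:=y)) k) = (\<Sum>k\<in>{1..K}. \<theta> k)"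
    using s[of "\<theta>(u:=x, v:=y)"] s[of \<theta>] r assms by simp
  then show ?thesis using assms unfolding simplex_def by auto
qed

theorem theorem6:
  fixes K :: nat and p q :: real and \<phi> \<theta> :: "nat \<Rightarrow> real" and i j :: nat
  assumes "K \<ge> 2"
    and "0 < q" and "q < p" and "p + (real K - 1) * q = 1"
    and "\<phi> \<in> simplex K"
    and "is_MLE K p q \<phi> \<theta>"
    and "i \<in> {1..K}" and "j \<in> {1..K}"
    and "\<phi> i \<le> \<phi> j"
  shows "\<theta> i \<le> \<theta> j"
proof (rule ccontr)
  assume "\<not> \<theta> i \<le> \<theta> j"
  hence gt: "\<theta> i > \<theta> j" by simp
  have ij: "i \<noteq> j" using gt by auto
  have th: "\<theta> \<in> simplex K" and opt: "\<And>t. t \<in> simplex K \<Longrightarrow> KL K \<phi> (model p q \<theta>) \<le> KL K \<phi> (model p q t)"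
    using assms(6) unfolding is_MLE_def by auto
  have thpos: "\<And>k. k \<in> {1..K} \<Longrightarrow> \<theta> k \<ge> 0" using th unfolding simplex_def by auto
  have phpos: "\<And>k. k \<in> {1..K} \<Longrightarrow> \<phi> k \<ge> 0" using assms(5) unfolding simplex_def by auto
  have pq: "p - q > 0" using assms by simp
  have Tpos: "\<And>f m. f > 0 \<Longrightarrow> m > 0 \<Longrightarrow> TT f m = f * (ln f - ln m)"
    by (simp add: TT_def ln_div)
  define a where "a = model p q \<theta> i"
  define b where "b = model p q \<theta> j"
  have b0: "b \<ge> q" unfolding b_def model_def using thpos[OF assms(8)] pq by simp
  have ab: "a > b" unfolding a_def b_def model_def using gt pq by simp
  have a0: "a > 0" "b > 0" using ab b0 assms(2) by auto
  show False
  proof (cases "\<phi> i = 0")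
    case True
    have "\<exists>k\<in>{1..K}. \<phi> k > 0"
    proof (rule ccontr)
      assume "\<not> ?thesis"
      hence "\<forall>k\<in>{1..K}. \<phi> k = 0" using phpos by force
      hence "(\<Sum>k=1..K. \<phi> k) = 0" by simp
      thus False using assms(5) unfolding simplex_def by simp
    qed
    then obtain k where k: "k \<in> {1..K}" "\<phi> k > 0" by blast
    have ik: "i \<noteq> k" using k True by auto
    define t where "t = \<theta>(i:=0, k:=\<theta> k + \<theta> i)"
    have "t \<in> simplex K" unfolding t_def
      by (rule simplex_mod[OF th assms(7) k(1) ik]) (use thpos[OF k(1)] thpos[OF assms(7)] in auto)
    hence le: "KL K \<phi> (model p q \<theta>) \<le> KL K \<phi> (model p q t)" by (rule opt)
    have c0: "model p q \<theta> k > 0" using thpos[OF k(1)] pq assms(2) unfolding model_def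
      by (smt (verit) mult_nonneg_nonneg)
    have cl: "model p q \<theta> k < q + (p-q)*(\<theta> k + \<theta> i)"
      unfolding model_def using gt thpos[OF assms(8)] pq by (simp add: algebra_simps)
    have "ln (model p q \<theta> k) < ln (q + (p-q)*(\<theta> k + \<theta> i))" using c0 cl by simp
    hence "TT (\<phi> k) (q + (p-q)*(\<theta> k + \<theta> i)) < TT (\<phi> k) (model p q \<theta> k)"
      using Tpos[OF k(2) c0] Tpos[OF k(2)] c0 cl k(2) by simp
    moreover have "TT (\<phi> i) x = 0" for x using True by (simp add: TT_def)
    ultimately show False using le KL_mod[OF assms(7) k(1) ik, of \<phi> p q \<theta> 0 "\<theta> k + \<theta> i"]
      unfolding t_def by simp
  next
    case False
    hence fi: "\<phi> i > 0" using phpos[OF assms(7)] by simp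
    show False
    proof (cases "\<phi> i < \<phi> j")
      case True
      hence fj: "\<phi> j > 0" using fi by simp
      define t where "t = \<theta>(i:=\<theta> j, j:=\<theta> i)"
      have "t \<in> simplex K" unfolding t_def
        by (rule simplex_mod[OF th assms(7) assms(8) ij]) (use thpos[OF assms(7)] thpos[OF assms(8)] in auto)
      hence le: "KL K \<phi> (model p q \<theta>) \<le> KL K \<phi> (model p q t)" by (rule opt)
      have lab: "ln a > ln b" using ab a0 by simp
      have "(\<phi> j - \<phi> i) * (ln a - ln b) > 0" using True lab by simp
      hence "TT (\<phi> i) b + TT (\<phi> j) a < TT (\<phi> i) a + TT (\<phi> j) b"
        using Tpos[OF fi a0(1)] Tpos[OF fi a0(2)] Tpos[OF fj a0(1)] Tpos[OF fj a0(2)]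
        by (simp add: algebra_simps)
      then show False using le KL_mod[OF assms(7) assms(8) ij, of \<phi> p q \<theta> "\<theta> j" "\<theta> i"]
        unfolding t_def a_def b_def model_def by simp
    next
      case False
      hence eq: "\<phi> j = \<phi> i" using assms(9) by simp
      define m where "m = (\<theta> i + \<theta> j) / 2"
      define t where "t = \<theta>(i:=m, j:=m)"
      have "t \<in> simplex K" unfolding t_def
        by (rule simplex_mod[OF th assms(7) assms(8) ij]) (use thpos[OF assms(7)] thpos[OF assms(8)] in \<open>auto simp: m_def\<close>)
      hence le: "KL K \<phi> (model p q \<theta>) \<le> KL K \<phi> (model p q t)" by (rule opt)
      have mm: "q + (p-q)*m = (a+b)/2" unfolding m_def a_def b_def model_def by (simp add: field_simps)
      have "a * b < ((a+b)/2)^2"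
      proof -
        have "((a+b)/2)^2 - a*b = ((a-b)/2)^2" by (simp add: power2_eq_square algebra_simps)
        moreover have "((a-b)/2)^2 > 0" using ab by simp
        ultimately show ?thesis by linarith
      qed
      hence "ln (a*b) < ln (((a+b)/2)^2)" using a0 by (simp add: mult_pos_pos)
      hence "ln a + ln b < 2 * ln ((a+b)/2)" using a0 by (simp add: ln_mult ln_realpow)
      hence "\<phi> i * (ln a + ln b) < \<phi> i * (2 * ln ((a+b)/2))" using fi by simp
      moreover have "(a+b)/2 > 0" using a0 by simp
      ultimately have "2 * TT (\<phi> i) ((a+b)/2) < TT (\<phi> i) a + TT (\<phi> i) b"
        using Tpos[OF fi a0(1)] Tpos[OF fi a0(2)] Tpos[OF fi, of "(a+b)/2"] by (simp add: algebra_simps)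
      then show False using le KL_mod[OF assms(7) assms(8) ij, of \<phi> p q \<theta> m m] eq mm
        unfolding t_def a_def b_def by simp
    qed
  qed
qed

end
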